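(* Every locally sofic monoid is sofic.
   Context: A monoid is locally sofic if every finitely generated submonoid of it is sofic (submonoids contain the identity). For a non-empty finite set $X$, $\mathrm{Map}(X)$ is the monoid of all maps $X\to X$ under composition (identity $\mathrm{Id}_X$) with the Hamming metric $d_X(f,g)=|\{x\in X : f(x)\ne g(x)\}|/|X|$. For a monoid $M$, finite $K\subset M$ and $\varepsilon,\alpha>0$, a map $\varphi\colon M\to\mathrm{Map}(X)$ is a $(K,\varepsilon)$-morphism if $d_X(\varphi(k_1k_2),\varphi(k_1)\varphi(k_2))\le\varepsilon$ for all $k_1,k_2\in K$ and $d_X(\varphi(1_M),\mathrm{Id}_X)\le\varepsilon$; it is $(K,\alpha)$-injective if $d_X(\varphi(k_1),\varphi(k_2))\ge\alpha$ for all distinct $k_1,k_2\in K$. $M$ is sofic if for every finite $K\subset M$ and every $\varepsilon>0$ there exist a non-empty finite set $X$ and a $(K,1-\varepsilon)$-injective $(K,\varepsilon)$-morphism $\varphi\colon M\to\mathrm{Map}(X)$. *)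

theory Defs
  imports Complex_Main "HOL-Algebra.Group"
begin

text \<open>Finite sets X are taken as finite subsets of nat (every finite set is in
bijection with one). An element of Map(X) is represented by a function
nat => nat that maps X into X; only its values on X matter.\<close>

definition ham_dist :: "nat set \<Rightarrow> (nat \<Rightarrow> nat) \<Rightarrow> (nat \<Rightarrow> nat) \<Rightarrow> real" where
  "ham_dist X f g = real (card {x \<in> X. f x \<noteq> g x}) / real (card X)"

definition is_KE_morphism ::
  "('a, 'b) monoid_scheme \<Rightarrow> nat set \<Rightarrow> ('a \<Rightarrow> nat \<Rightarrow> nat) \<Rightarrow> 'a set \<Rightarrow> real \<Rightarrow> bool" where
  "is_KE_morphism M X \<phi> K \<epsilon> \<longleftrightarrow>
     (\<forall>k1\<in>K. \<forall>k2\<in>K. ham_dist X (\<phi> (k1 \<otimes>\<^bsub>M\<^esub> k2)) (\<phi> k1 \<circ> \<phi> k2) \<le> \<epsilon>)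
     \<and> ham_dist X (\<phi> \<one>\<^bsub>M\<^esub>) id \<le> \<epsilon>"

definition is_K_injective ::
  "nat set \<Rightarrow> ('a \<Rightarrow> nat \<Rightarrow> nat) \<Rightarrow> 'a set \<Rightarrow> real \<Rightarrow> bool" where
  "is_K_injective X \<phi> K \<alpha> \<longleftrightarrow>
     (\<forall>k1\<in>K. \<forall>k2\<in>K. k1 \<noteq> k2 \<longrightarrow> ham_dist X (\<phi> k1) (\<phi> k2) \<ge> \<alpha>)"

definition sofic :: "('a, 'b) monoid_scheme \<Rightarrow> bool" where
  "sofic M \<longleftrightarrow>
     (\<forall>K \<epsilon>. finite K \<and> K \<subseteq> carrier M \<and> \<epsilon> > 0 \<longrightarrow>
        (\<exists>X :: nat set. finite X \<and> X \<noteq> {} \<and>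
          (\<exists>\<phi> :: 'a \<Rightarrow> nat \<Rightarrow> nat.
             (\<forall>m \<in> carrier M. \<phi> m ` X \<subseteq> X)
             \<and> is_K_injective X \<phi> K (1 - \<epsilon>)
             \<and> is_KE_morphism M X \<phi> K \<epsilon>)))"

definition fg_submonoid :: "'a set \<Rightarrow> ('a, 'b) monoid_scheme \<Rightarrow> bool" where
  "fg_submonoid H M \<longleftrightarrow> submonoid H M \<and>
     (\<exists>A. finite A \<and> A \<subseteq> H \<and> (\<forall>H'. submonoid H' M \<and> A \<subseteq> H' \<longrightarrow> H \<subseteq> H'))"

definition locally_sofic :: "('a, 'b) monoid_scheme \<Rightarrow> bool" where
  "locally_sofic M \<longleftrightarrow> (\<forall>H. fg_submonoid H M \<longrightarrow> sofic (M\<lparr>carrier := H\<rparr>))"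

end

theory Submission
  imports Defs
begin

theorem proposition3p6:
  fixes M :: "('a, 'b) monoid_scheme"
  assumes "monoid M"
    and "locally_sofic M"
  shows "sofic M"
  unfolding sofic_def
proof (intro allI impI)
  fix K and \<epsilon> :: real
  assume A: "finite K \<and> K \<subseteq> carrier M \<and> \<epsilon> > 0"
  define H where "H = \<Inter>{H'. submonoid H' M \<and> K \<subseteq> H'}"
  have cs: "submonoid (carrier M) M"
    using assms(1) by (intro submonoid.intro) (auto simp: monoid.m_closed)
  have sH: "submonoid H M"
  proof
    show "H \<subseteq> carrier M" unfolding H_def using cs A by blast
    show "\<one>\<^bsub>M\<^esub> \<in> H" unfolding H_def by (simp add: submonoid.one_closed)
    fix x y assume "x \<in> H" "y \<in> H"
    thus "x \<otimes>\<^bsub>M\<^esub> y \<in> H" unfolding H_def by (simp add: submonoid.m_closed)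
  qed
  have KH: "K \<subseteq> H" unfolding H_def by auto
  have "fg_submonoid H M"
    unfolding fg_submonoid_def using sH KH A by (auto simp: H_def)
  hence "sofic (M\<lparr>carrier := H\<rparr>)" using assms(2) locally_sofic_def by blast
  hence "\<exists>X :: nat set. finite X \<and> X \<noteq> {} \<and>
          (\<exists>\<phi> :: 'a \<Rightarrow> nat \<Rightarrow> nat.
             (\<forall>m \<in> H. \<phi> m ` X \<subseteq> X)
             \<and> is_K_injective X \<phi> K (1 - \<epsilon>)
             \<and> is_KE_morphism (M\<lparr>carrier := H\<rparr>) X \<phi> K \<epsilon>)"
    unfolding sofic_def using A KH by (metis partial_object.select_convs(1) partial_object.surjective partial_object.update_convs(1))
  then obtain X and \<phi> :: "'a \<Rightarrow> nat \<Rightarrow> nat" where X: "finite X" "X \<noteq> {}"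
    and inj: "is_K_injective X \<phi> K (1 - \<epsilon>)"
    and mor: "is_KE_morphism (M\<lparr>carrier := H\<rparr>) X \<phi> K \<epsilon>"
    and inv: "\<forall>m \<in> H. \<phi> m ` X \<subseteq> X"
    by blast
  define \<psi> where "\<psi> m = (if m \<in> H then \<phi> m else id)" for m
  have eq: "\<And>m. m \<in> H \<Longrightarrow> \<psi> m = \<phi> m" by (simp add: \<psi>_def)
  have "\<forall>m \<in> carrier M. \<psi> m ` X \<subseteq> X" using inv by (auto simp: \<psi>_def)
  moreover have "is_K_injective X \<psi> K (1 - \<epsilon>)"
    using inj KH eq unfolding is_K_injective_def by (metis subsetD)
  moreover have "is_KE_morphism M X \<psi> K \<epsilon>"
  proof -
    have 1: "\<one>\<^bsub>M\<^esub> \<in> H" using submonoid.one_closed[OF sH] .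
    have 2: "\<And>a b. a \<in> K \<Longrightarrow> b \<in> K \<Longrightarrow> a \<otimes>\<^bsub>M\<^esub> b \<in> H"
      using KH by (intro submonoid.m_closed[OF sH]) auto
    show ?thesis unfolding is_KE_morphism_def
    proof (intro conjI ballI)
      fix a b assume ab: "a \<in> K" "b \<in> K"
      have "ham_dist X (\<phi> (a \<otimes>\<^bsub>M\<^esub> b)) (\<phi> a \<circ> \<phi> b) \<le> \<epsilon>"
        using mor ab unfolding is_KE_morphism_def by simp
      moreover have "\<psi> (a \<otimes>\<^bsub>M\<^esub> b) = \<phi> (a \<otimes>\<^bsub>M\<^esub> b)" "\<psi> a = \<phi> a" "\<psi> b = \<phi> b"
        using eq 2[OF ab] KH ab by auto
      ultimately show "ham_dist X (\<psi> (a \<otimes>\<^bsub>M\<^esub> b)) (\<psi> a \<circ> \<psi> b) \<le> \<epsilon>" by simp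
    next
      have "ham_dist X (\<phi> \<one>\<^bsub>M\<^esub>) id \<le> \<epsilon>"
        using mor unfolding is_KE_morphism_def by simp
      thus "ham_dist X (\<psi> \<one>\<^bsub>M\<^esub>) id \<le> \<epsilon>" using eq[OF 1] by simp
    qed
  qed
  ultimately show "\<exists>X :: nat set. finite X \<and> X \<noteq> {} \<and>
          (\<exists>\<phi> :: 'a \<Rightarrow> nat \<Rightarrow> nat.
             (\<forall>m \<in> carrier M. \<phi> m ` X \<subseteq> X)
             \<and> is_K_injective X \<phi> K (1 - \<epsilon>)
             \<and> is_KE_morphism M X \<phi> K \<epsilon>)" using X by blast
qed

end
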